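(* Let $N\ge 2$ and $d\ge 1$ be integers and let $f:\mathbb{Z}_N^d\to\mathbb{C}$ be a nonzero function with support $E=\mathrm{supp}(f)$ and Fourier support $\Sigma=\mathrm{supp}(\hat f)$. Then \[ N^d\le |E|\left(\Lambda_2(\Sigma)-|\Sigma|^2\left(1-\frac{N^d}{|E||\Sigma|}\right)-|\Sigma|(|\Sigma|-1)\left(1-\sqrt{\frac{N^d}{|E||\Sigma|}}\sqrt{\frac{\Lambda_2(E)}{|E|^3}}\right)\right)^{1/3} \] and \[ N^d\le |\Sigma|\left(\Lambda_2(E)-|E|^2\left(1-\frac{N^d}{|E||\Sigma|}\right)-|E|(|E|-1)\left(1-\sqrt{\frac{N^d}{|E||\Sigma|}}\sqrt{\frac{\Lambda_2(\Sigma)}{|\Sigma|^3}}\right)\right)^{1/3}. \]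
   Context: $\mathbb{Z}_N=\mathbb{Z}/N\mathbb{Z}$. The discrete Fourier transform of $f:\mathbb{Z}_N^d\to\mathbb{C}$ is $\hat f(m)=N^{-d/2}\sum_{x\in\mathbb{Z}_N^d}f(x)e^{-2\pi i\, m\cdot x/N}$ for $m\in\mathbb{Z}_N^d$. The support of a function is the set of points where it is nonzero. For $A\subseteq\mathbb{Z}_N^d$, the additive energy is $\Lambda_2(A)=\#\{(x_1,x_2,x_3,x_4)\in A^4: x_1+x_2=x_3+x_4\}$. *)

theory Defs
  imports "HOL-Analysis.Analysis"
begin

text \<open>Points of Z_N^d are represented as functions nat => nat with values < N
  at indices < d and 0 at all indices >= d.\<close>

definition ZNd :: "nat \<Rightarrow> nat \<Rightarrow> (nat \<Rightarrow> nat) set" where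
  "ZNd N d = {x. (\<forall>i<d. x i < N) \<and> (\<forall>i\<ge>d. x i = 0)}"

definition addN :: "nat \<Rightarrow> (nat \<Rightarrow> nat) \<Rightarrow> (nat \<Rightarrow> nat) \<Rightarrow> (nat \<Rightarrow> nat)" where
  "addN N x y = (\<lambda>i. (x i + y i) mod N)"

definition dotN :: "nat \<Rightarrow> (nat \<Rightarrow> nat) \<Rightarrow> (nat \<Rightarrow> nat) \<Rightarrow> nat" where
  "dotN d m x = (\<Sum>i<d. m i * x i)"

definition dft :: "nat \<Rightarrow> nat \<Rightarrow> ((nat \<Rightarrow> nat) \<Rightarrow> complex) \<Rightarrow> (nat \<Rightarrow> nat) \<Rightarrow> complex" where
  "dft N d f m = (1 / (sqrt (real N)) ^ d) *
     (\<Sum>x\<in>ZNd N d. f x * cis (- 2 * pi * real (dotN d m x) / real N))"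

definition suppN :: "nat \<Rightarrow> nat \<Rightarrow> ((nat \<Rightarrow> nat) \<Rightarrow> complex) \<Rightarrow> (nat \<Rightarrow> nat) set" where
  "suppN N d f = {x \<in> ZNd N d. f x \<noteq> 0}"

definition energy :: "nat \<Rightarrow> (nat \<Rightarrow> nat) set \<Rightarrow> nat" where
  "energy N A = card {(x1, x2, x3, x4). x1 \<in> A \<and> x2 \<in> A \<and> x3 \<in> A \<and> x4 \<in> A \<and>
                        addN N x1 x2 = addN N x3 x4}"

end

theory Submission
  imports Defs "HOL-Library.FuncSet"
begin

definition omg :: "nat \<Rightarrow> complex" where "omg N = cis (2 * pi / real N)"
definition chi :: "nat \<Rightarrow> nat \<Rightarrow> (nat \<Rightarrow> nat) \<Rightarrow> (nat \<Rightarrow> nat) \<Rightarrow> complex" where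
  "chi N d m x = omg N ^ dotN d m x"

lemma omg_N: "N > 0 \<Longrightarrow> omg N ^ N = 1"
  unfolding omg_def Complex.DeMoivre by simp

lemma omg_mod: "N > 0 \<Longrightarrow> omg N ^ k = omg N ^ (k mod N)"
proof -
  assume N: "N > 0"
  have "omg N ^ k = omg N ^ (N * (k div N) + k mod N)" by (metis mult_div_mod_eq)
  also have "\<dots> = (omg N ^ N) ^ (k div N) * omg N ^ (k mod N)"
    by (simp only: power_add power_mult)
  finally show ?thesis using omg_N[OF N] by simp
qed

lemma norm_omg [simp]: "norm (omg N) = 1" by (simp add: omg_def)

lemma omg_ne1: assumes "0 < k" "k < N" shows "omg N ^ k \<noteq> 1"
proof
  assume "omg N ^ k = 1"
  hence "cis (real k * (2 * pi / real N)) = 1" by (simp add: omg_def Complex.DeMoivre)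
  hence "cos (real k * (2 * pi / real N)) = 1" by (metis cis.sel(1) one_complex.sel(1))
  then obtain m :: int where m: "real k * (2 * pi / real N) = of_int m * 2 * pi"
    by (auto simp: cos_one_2pi_int)
  hence "real k = of_int m * real N" using assms by (simp add: field_simps)
  hence "int k = m * int N" by (metis of_int_eq_iff of_int_mult of_int_of_nat_eq)
  hence mk: "int k = m * int N" .
  have "0 < m * int N" using mk assms by simp
  hence "0 < m" using assms by (simp add: zero_less_mult_iff)
  hence "0 \<le> (m - 1) * int N" by simp
  hence "int N \<le> m * int N" by (simp add: algebra_simps)
  thus False using mk assms by linarith
qed

lemma omg_inj: assumes "a < N" "b < N" "omg N ^ a = omg N ^ b" shows "a = b"
proof (rule ccontr)
  assume ne: "a \<noteq> b"
  have nz: "omg N ^ k \<noteq> 0" for k by (metis norm_omg norm_power norm_zero power_one zero_neq_one)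
  { fix a b assume ab: "a < b" "b < N" "omg N ^ a = omg N ^ b"
    have "omg N ^ b = omg N ^ a * omg N ^ (b - a)" using ab by (metis le_add_diff_inverse less_imp_le power_add)
    hence "omg N ^ (b - a) = 1" using ab nz by (metis mult_cancel_left1)
    moreover have "0 < b - a" "b - a < N" using ab by auto
    ultimately have False using omg_ne1 by blast }
  thus False using ne assms by (metis linorder_neqE_nat)
qed

lemma ZNd_fin_card: "finite (ZNd N d) \<and> card (ZNd N d) = N ^ d"
proof -
  have bij: "bij_betw (\<lambda>x. restrict x {..<d}) (ZNd N d) (PiE {..<d} (\<lambda>_. {..<N}))"
  proof (rule bij_betw_byWitness[where f' = "\<lambda>y i. if i < d then y i else 0"])
    show "\<forall>a\<in>ZNd N d. (\<lambda>i. if i < d then restrict a {..<d} i else 0) = a"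
      by (auto simp: ZNd_def fun_eq_iff)
    show "\<forall>a'\<in>PiE {..<d} (\<lambda>_. {..<N}). restrict (\<lambda>i. if i < d then a' i else 0) {..<d} = a'"
      by (auto simp: PiE_def extensional_def fun_eq_iff)
    show "(\<lambda>x. restrict x {..<d}) ` ZNd N d \<subseteq> PiE {..<d} (\<lambda>_. {..<N})"
      by (auto simp: ZNd_def PiE_def extensional_def split: if_splits)
    show "(\<lambda>y i. if i < d then y i else 0) ` PiE {..<d} (\<lambda>_. {..<N}) \<subseteq> ZNd N d"
      by (auto simp: ZNd_def PiE_def Pi_def)
  qed
  have "finite (PiE {..<d} (\<lambda>_. {..<N}::nat set))" by (simp add: finite_PiE)
  moreover have "card (PiE {..<d} (\<lambda>_. {..<N}::nat set)) = N ^ d" by (simp add: card_PiE)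
  ultimately show ?thesis using bij bij_betw_finite bij_betw_same_card by metis
qed

lemma addN_ZNd: "N > 0 \<Longrightarrow> x \<in> ZNd N d \<Longrightarrow> y \<in> ZNd N d \<Longrightarrow> addN N x y \<in> ZNd N d"
  by (auto simp: ZNd_def addN_def)

lemma addN_comm: "addN N x y = addN N y x" by (simp add: addN_def add.commute)

lemma dotN_comm: "dotN d m x = dotN d x m" by (simp add: dotN_def mult.commute)

lemma dotN_add_mod: "dotN d m (addN N x y) mod N = (dotN d m x + dotN d m y) mod N"
proof -
  have "dotN d m (addN N x y) mod N = (\<Sum>i<d. m i * ((x i + y i) mod N) mod N) mod N"
    by (simp add: dotN_def addN_def mod_sum_eq)
  also have "\<dots> = (\<Sum>i<d. m i * (x i + y i) mod N) mod N"
    by (simp add: mod_mult_right_eq)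
  also have "\<dots> = (\<Sum>i<d. m i * (x i + y i)) mod N" by (simp add: mod_sum_eq)
  also have "\<dots> = (dotN d m x + dotN d m y) mod N"
    by (simp add: dotN_def sum.distrib algebra_simps)
  finally show ?thesis .
qed

lemma chi_comm: "chi N d m x = chi N d x m" by (simp add: chi_def dotN_comm)

lemma chi_add2: "N > 0 \<Longrightarrow> chi N d m (addN N x y) = chi N d m x * chi N d m y"
  by (metis chi_def dotN_add_mod omg_mod power_add)

lemma chi_add1: "N > 0 \<Longrightarrow> chi N d a x * chi N d b x = chi N d (addN N a b) x"
  by (metis chi_add2 chi_comm)

lemma norm_chi [simp]: "norm (chi N d m x) = 1" by (simp add: chi_def norm_power)

lemma chi_cnj: "chi N d m x * cnj (chi N d m x) = 1"
  by (metis complex_norm_square norm_chi of_real_1 power_one)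

lemma mod_add_rcancel_nat: "((a::nat) + c) mod N = (b + c) mod N \<Longrightarrow> a mod N = b mod N"
proof -
  assume h: "(a + c) mod N = (b + c) mod N"
  hence "int ((a + c) mod N) = int ((b + c) mod N)" by simp
  hence "(int a + int c) mod int N = (int b + int c) mod int N" by (simp add: of_nat_mod)
  hence "int a mod int N = int b mod int N" by (simp add: mod_eq_dvd_iff)
  hence "int (a mod N) = int (b mod N)" by (simp add: of_nat_mod)
  thus ?thesis by simp
qed

lemma addN_inj: "N > 0 \<Longrightarrow> inj_on (\<lambda>x. addN N x y) (ZNd N d)"
proof (rule inj_onI)
  fix a b assume N: "N > 0" and a: "a \<in> ZNd N d" and b: "b \<in> ZNd N d" and e: "addN N a y = addN N b y"
  show "a = b"
  proof
    fix i
    show "a i = b i"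
    proof (cases "i < d")
      case True
      have "(a i + y i) mod N = (b i + y i) mod N" using e by (metis addN_def)
      hence "a i mod N = b i mod N" by (rule mod_add_rcancel_nat)
      thus ?thesis using a b True by (simp add: ZNd_def)
    next
      case False thus ?thesis using a b by (simp add: ZNd_def)
    qed
  qed
qed

lemma addN_surj: "N > 0 \<Longrightarrow> y \<in> ZNd N d \<Longrightarrow> (\<lambda>x. addN N x y) ` ZNd N d = ZNd N d"
  by (rule endo_inj_surj) (auto simp: ZNd_fin_card addN_inj addN_ZNd)

lemma sum_translate: "N > 0 \<Longrightarrow> y \<in> ZNd N d \<Longrightarrow>
   (\<Sum>x\<in>ZNd N d. h (addN N x y)) = (\<Sum>x\<in>ZNd N d. (h x :: complex))"
proof -
  assume N: "N > 0" and y: "y \<in> ZNd N d"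
  have "(\<Sum>x\<in>ZNd N d. h x) = (\<Sum>x\<in>(\<lambda>x. addN N x y) ` ZNd N d. h x)" using addN_surj[OF N y] by simp
  also have "\<dots> = (\<Sum>x\<in>ZNd N d. h (addN N x y))" by (rule sum.reindex[OF addN_inj[OF N], unfolded comp_def])
  finally show ?thesis by simp
qed

lemma chi_orth: assumes N: "N \<ge> 2" and u: "u \<in> ZNd N d" and v: "v \<in> ZNd N d"
  shows "(\<Sum>x\<in>ZNd N d. chi N d u x * cnj (chi N d v x)) = (if u = v then of_nat (N ^ d) else 0)"
proof (cases "u = v")
  case True thus ?thesis by (simp add: chi_cnj ZNd_fin_card)
next
  case False
  then obtain i where ne: "u i \<noteq> v i" by (auto simp: fun_eq_iff)
  have i: "i < d"
  proof (rule ccontr)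
    assume "\<not> i < d" thus False using u v ne by (simp add: ZNd_def)
  qed
  define y where "y = (\<lambda>j. if j = i then 1 else 0 :: nat)"
  have y: "y \<in> ZNd N d" using N i by (auto simp: ZNd_def y_def)
  have dy: "dotN d w y = w i" for w using i by (simp add: dotN_def y_def if_distrib cong: if_cong)
  define c where "c = chi N d u y * cnj (chi N d v y)"
  define S where "S = (\<Sum>x\<in>ZNd N d. chi N d u x * cnj (chi N d v x))"
  have "S = (\<Sum>x\<in>ZNd N d. chi N d u (addN N x y) * cnj (chi N d v (addN N x y)))"
    unfolding S_def using sum_translate[of N y d "\<lambda>x. chi N d u x * cnj (chi N d v x)"] N y by simp
  also have "\<dots> = (\<Sum>x\<in>ZNd N d. (chi N d u x * cnj (chi N d v x)) * c)"
  proof (rule sum.cong)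
    fix x assume "x \<in> ZNd N d"
    have "chi N d u (addN N x y) * cnj (chi N d v (addN N x y)) =
       (chi N d u x * chi N d u y) * (cnj (chi N d v x) * cnj (chi N d v y))"
      using N by (simp add: chi_add2)
    thus "chi N d u (addN N x y) * cnj (chi N d v (addN N x y)) = (chi N d u x * cnj (chi N d v x)) * c"
      by (simp add: c_def)
  qed simp
  also have "\<dots> = S * c" by (simp add: S_def sum_distrib_right)
  finally have Sc: "S = S * c" .
  have "c \<noteq> 1"
  proof
    assume "c = 1"
    have "chi N d u y = chi N d u y * (chi N d v y * cnj (chi N d v y))" by (simp add: chi_cnj)
    also have "\<dots> = c * chi N d v y" unfolding c_def by (simp only: ac_simps)
    finally have "chi N d u y = chi N d v y" using \<open>c = 1\<close> by simp
    hence "omg N ^ u i = omg N ^ v i" by (simp add: chi_def dy)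
    thus False using omg_inj[of "u i" N "v i"] u v i ne by (auto simp: ZNd_def)
  qed
  hence "S = 0" using Sc by (metis mult_cancel_left2)
  thus ?thesis using False by (simp add: S_def)
qed

definition QS :: "('a \<Rightarrow> 'a \<Rightarrow> 'a) \<Rightarrow> 'a set \<Rightarrow> (('a \<times> 'a) \<times> ('a \<times> 'a)) set" where
  "QS add S = {(p, q). p \<in> S \<times> S \<and> q \<in> S \<times> S \<and> add (fst p) (snd p) = add (fst q) (snd q)}"

lemma plancherel_gen:
  fixes \<phi> :: "'a \<Rightarrow> 'a \<Rightarrow> complex"
  assumes fin: "finite G" and orth: "\<And>u v. u \<in> G \<Longrightarrow> v \<in> G \<Longrightarrow> (\<Sum>x\<in>G. \<phi> u x * cnj (\<phi> v x)) = (if u = v then of_nat n else 0)"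
  shows "(\<Sum>x\<in>G. (cmod (\<Sum>u\<in>G. K u * \<phi> u x))^2) = real n * (\<Sum>u\<in>G. (cmod (K u))^2)"
proof -
  have "complex_of_real (\<Sum>x\<in>G. (cmod (\<Sum>u\<in>G. K u * \<phi> u x))^2)
      = (\<Sum>x\<in>G. (\<Sum>u\<in>G. K u * \<phi> u x) * cnj (\<Sum>v\<in>G. K v * \<phi> v x))"
    by (simp only: of_real_sum complex_norm_square)
  also have "\<dots> = (\<Sum>x\<in>G. \<Sum>u\<in>G. \<Sum>v\<in>G. K u * cnj (K v) * (\<phi> u x * cnj (\<phi> v x)))"
    by (simp add: cnj_sum sum_product mult_ac)
  also have "\<dots> = (\<Sum>u\<in>G. \<Sum>v\<in>G. \<Sum>x\<in>G. K u * cnj (K v) * (\<phi> u x * cnj (\<phi> v x)))"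
    by (subst sum.swap, rule sum.cong[OF refl], subst sum.swap, simp)
  also have "\<dots> = (\<Sum>u\<in>G. \<Sum>v\<in>G. K u * cnj (K v) * (if u = v then of_nat n else 0))"
    by (intro sum.cong refl) (simp add: sum_distrib_left[symmetric] orth)
  also have "\<dots> = (\<Sum>u\<in>G. K u * cnj (K u) * of_nat n)"
    by (intro sum.cong refl) (simp add: if_distrib sum.delta fin cong: if_cong)
  also have "\<dots> = (\<Sum>u\<in>G. complex_of_real ((cmod (K u))^2) * of_nat n)"
    by (simp only: complex_norm_square)
  also have "\<dots> = complex_of_real (real n * (\<Sum>u\<in>G. (cmod (K u))^2))"
    by (simp add: sum_distrib_left mult_ac)
  finally show ?thesis by (simp only: of_real_eq_iff)
qed

lemma quartic_gen:
  fixes \<phi> :: "'a \<Rightarrow> 'a \<Rightarrow> complex" and H F :: "'a \<Rightarrow> complex"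
  assumes fin: "finite G"
    and orth: "\<And>u v. u \<in> G \<Longrightarrow> v \<in> G \<Longrightarrow> (\<Sum>x\<in>G. \<phi> u x * cnj (\<phi> v x)) = (if u = v then of_nat n else 0)"
    and mult: "\<And>a b x. a \<in> G \<Longrightarrow> b \<in> G \<Longrightarrow> x \<in> G \<Longrightarrow> \<phi> a x * \<phi> b x = \<phi> (add a b) x"
    and addG: "\<And>a b. a \<in> G \<Longrightarrow> b \<in> G \<Longrightarrow> add a b \<in> G"
    and Fdef: "\<And>x. x \<in> G \<Longrightarrow> F x = c * (\<Sum>a\<in>G. H a * \<phi> a x)"
    and c: "(cmod c)^2 * real n = 1"
  shows "real n * (\<Sum>x\<in>G. (cmod (F x))^4) \<le>
     (\<Sum>pq\<in>QS add {a\<in>G. H a \<noteq> 0}. (cmod (H (fst (fst pq))) * cmod (H (snd (fst pq)))) *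
                                   (cmod (H (fst (snd pq))) * cmod (H (snd (snd pq)))))"
proof -
  define S where "S = {a\<in>G. H a \<noteq> 0}"
  define ad where "ad = (\<lambda>p. add (fst p) (snd p))"
  define Conv where "Conv = (\<lambda>u. \<Sum>p\<in>G\<times>G. if ad p = u then H (fst p) * H (snd p) else 0)"
  define wp where "wp = (\<lambda>p. cmod (H (fst p)) * cmod (H (snd p)))"
  define Cw where "Cw = (\<lambda>u. \<Sum>p\<in>G\<times>G. if ad p = u then wp p else 0)"
  have adG: "p \<in> G \<times> G \<Longrightarrow> ad p \<in> G" for p by (auto simp: ad_def addG)
  have A: "F x ^ 2 = c^2 * (\<Sum>u\<in>G. Conv u * \<phi> u x)" if x: "x \<in> G" for x
  proof -
    have "F x ^ 2 = c^2 * ((\<Sum>a\<in>G. H a * \<phi> a x) * (\<Sum>b\<in>G. H b * \<phi> b x))"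
      by (simp add: Fdef[OF x] power2_eq_square mult_ac)
    also have "(\<Sum>a\<in>G. H a * \<phi> a x) * (\<Sum>b\<in>G. H b * \<phi> b x) = (\<Sum>p\<in>G\<times>G. H (fst p) * H (snd p) * \<phi> (ad p) x)"
    proof -
      have "(\<Sum>a\<in>G. H a * \<phi> a x) * (\<Sum>b\<in>G. H b * \<phi> b x) = (\<Sum>a\<in>G. \<Sum>b\<in>G. H a * \<phi> a x * (H b * \<phi> b x))"
        by (rule sum_product)
      also have "\<dots> = (\<Sum>(a,b)\<in>G\<times>G. H a * \<phi> a x * (H b * \<phi> b x))" by (rule sum.cartesian_product)
      also have "\<dots> = (\<Sum>p\<in>G\<times>G. H (fst p) * H (snd p) * \<phi> (ad p) x)"
        by (rule sum.cong) (auto simp: ad_def mult[OF _ _ x, symmetric] mult_ac)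
      finally show ?thesis .
    qed
    also have "\<dots> = (\<Sum>p\<in>G\<times>G. \<Sum>u\<in>G. if ad p = u then H (fst p) * H (snd p) * \<phi> u x else 0)"
      by (intro sum.cong refl) (simp add: sum.delta' fin adG)
    also have "\<dots> = (\<Sum>u\<in>G. \<Sum>p\<in>G\<times>G. if ad p = u then H (fst p) * H (snd p) * \<phi> u x else 0)"
      by (rule sum.swap)
    also have "\<dots> = (\<Sum>u\<in>G. Conv u * \<phi> u x)"
      unfolding Conv_def sum_distrib_right by (intro sum.cong refl) simp
    finally show ?thesis .
  qed
  have B: "real n * (\<Sum>x\<in>G. (cmod (F x))^4) = (\<Sum>u\<in>G. (cmod (Conv u))^2)"
  proof -
    have "(\<Sum>x\<in>G. (cmod (F x))^4) = (\<Sum>x\<in>G. (cmod c)^4 * (cmod (\<Sum>u\<in>G. Conv u * \<phi> u x))^2)"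
    proof (intro sum.cong refl)
      fix x assume x: "x \<in> G"
      have "(cmod (F x))^4 = (cmod (F x ^ 2))^2" by (simp add: norm_power power_mult[symmetric])
      also have "\<dots> = (cmod c)^4 * (cmod (\<Sum>u\<in>G. Conv u * \<phi> u x))^2"
        by (simp add: A[OF x] norm_mult norm_power power_mult_distrib power_mult[symmetric])
      finally show "(cmod (F x))^4 = (cmod c)^4 * (cmod (\<Sum>u\<in>G. Conv u * \<phi> u x))^2" .
    qed
    also have "\<dots> = (cmod c)^4 * (real n * (\<Sum>u\<in>G. (cmod (Conv u))^2))"
      by (simp add: sum_distrib_left[symmetric] plancherel_gen[OF fin orth])
    finally have "(\<Sum>x\<in>G. (cmod (F x))^4) = (cmod c)^4 * (real n * (\<Sum>u\<in>G. (cmod (Conv u))^2))" .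
    hence 1: "real n * (\<Sum>x\<in>G. (cmod (F x))^4) = ((cmod c)^4 * real n * real n) * (\<Sum>u\<in>G. (cmod (Conv u))^2)"
      by (simp add: mult_ac)
    have "(cmod c)^4 * real n * real n = ((cmod c)^2 * real n)^2" by (simp add: eval_nat_numeral algebra_simps)
    also have "\<dots> = 1" using c by simp
    finally show ?thesis using 1 by simp
  qed
  have C: "(cmod (Conv u))^2 \<le> (Cw u)^2" for u
  proof -
    have "cmod (Conv u) \<le> (\<Sum>p\<in>G\<times>G. cmod (if ad p = u then H (fst p) * H (snd p) else 0))"
      unfolding Conv_def by (rule norm_sum)
    also have "\<dots> = Cw u" unfolding Cw_def wp_def by (intro sum.cong refl) (simp add: norm_mult)
    finally show ?thesis by (simp add: power_mono)
  qed
  have D: "(\<Sum>u\<in>G. (Cw u)^2) = (\<Sum>p\<in>G\<times>G. \<Sum>q\<in>G\<times>G. if ad p = ad q then wp p * wp q else 0)"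
  proof -
    have "(\<Sum>u\<in>G. (Cw u)^2) = (\<Sum>u\<in>G. \<Sum>p\<in>G\<times>G. \<Sum>q\<in>G\<times>G. (if ad p = u then wp p else 0) * (if ad q = u then wp q else 0))"
      by (simp add: Cw_def power2_eq_square sum_product)
    also have "\<dots> = (\<Sum>p\<in>G\<times>G. \<Sum>q\<in>G\<times>G. \<Sum>u\<in>G. (if ad p = u then wp p else 0) * (if ad q = u then wp q else 0))"
      by (subst sum.swap, rule sum.cong[OF refl], subst sum.swap, simp)
    also have "\<dots> = (\<Sum>p\<in>G\<times>G. \<Sum>q\<in>G\<times>G. if ad p = ad q then wp p * wp q else 0)"
    proof (intro sum.cong refl)
      fix p q assume p: "p \<in> G \<times> G"
      have "(\<Sum>u\<in>G. (if ad p = u then wp p else 0) * (if ad q = u then wp q else 0))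
          = (\<Sum>u\<in>G. if ad p = u then (if ad p = ad q then wp p * wp q else 0) else 0)"
        by (intro sum.cong refl) auto
      also have "\<dots> = (if ad p = ad q then wp p * wp q else 0)" by (simp add: sum.delta' fin adG[OF p])
      finally show "(\<Sum>u\<in>G. (if ad p = u then wp p else 0) * (if ad q = u then wp q else 0))
          = (if ad p = ad q then wp p * wp q else 0)" .
    qed
    finally show ?thesis .
  qed
  have SG: "S \<times> S \<subseteq> G \<times> G" by (auto simp: S_def)
  have wp0: "p \<in> G \<times> G - S \<times> S \<Longrightarrow> wp p = 0" for p by (auto simp: wp_def S_def)
  have E: "(\<Sum>p\<in>G\<times>G. \<Sum>q\<in>G\<times>G. if ad p = ad q then wp p * wp q else 0)
      = (\<Sum>pq\<in>QS add S. wp (fst pq) * wp (snd pq))"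
  proof -
    have "(\<Sum>p\<in>G\<times>G. \<Sum>q\<in>G\<times>G. if ad p = ad q then wp p * wp q else 0)
        = (\<Sum>p\<in>S\<times>S. \<Sum>q\<in>G\<times>G. if ad p = ad q then wp p * wp q else 0)"
    proof (rule sum.mono_neutral_right[OF _ SG])
      show "finite (G\<times>G)" using fin by simp
      show "\<forall>p\<in>G\<times>G - S\<times>S. (\<Sum>q\<in>G\<times>G. if ad p = ad q then wp p * wp q else 0) = 0"
      proof
        fix p assume "p \<in> G\<times>G - S\<times>S"
        hence "wp p = 0" by (rule wp0)
        thus "(\<Sum>q\<in>G\<times>G. if ad p = ad q then wp p * wp q else 0) = 0"
          by (simp only: mult_zero_left if_cancel sum.neutral_const)
      qed
    qed
    also have "\<dots> = (\<Sum>p\<in>S\<times>S. \<Sum>q\<in>S\<times>S. if ad p = ad q then wp p * wp q else 0)"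
    proof (rule sum.cong[OF refl])
      fix p
      show "(\<Sum>q\<in>G\<times>G. if ad p = ad q then wp p * wp q else 0) = (\<Sum>q\<in>S\<times>S. if ad p = ad q then wp p * wp q else 0)"
      proof (rule sum.mono_neutral_right[OF _ SG])
        show "finite (G\<times>G)" using fin by simp
        show "\<forall>q\<in>G\<times>G - S\<times>S. (if ad p = ad q then wp p * wp q else 0) = 0"
        proof
          fix q assume "q \<in> G\<times>G - S\<times>S"
          hence "wp q = 0" by (rule wp0)
          thus "(if ad p = ad q then wp p * wp q else 0) = 0"
            by (simp only: mult_zero_right if_cancel)
        qed
      qed
    qed
    also have "\<dots> = (\<Sum>pq\<in>(S\<times>S)\<times>(S\<times>S). if ad (fst pq) = ad (snd pq) then wp (fst pq) * wp (snd pq) else 0)"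
      by (simp add: sum.cartesian_product case_prod_unfold)
    also have "\<dots> = (\<Sum>pq\<in>{pq \<in> (S\<times>S)\<times>(S\<times>S). ad (fst pq) = ad (snd pq)}. wp (fst pq) * wp (snd pq))"
      by (rule sum.inter_filter[symmetric]) (auto simp: S_def fin)
    also have "{pq \<in> (S\<times>S)\<times>(S\<times>S). ad (fst pq) = ad (snd pq)} = QS add S"
      by (auto simp: QS_def ad_def)
    finally show ?thesis .
  qed
  have "real n * (\<Sum>x\<in>G. (cmod (F x))^4) \<le> (\<Sum>u\<in>G. (Cw u)^2)"
    unfolding B by (rule sum_mono) (rule C)
  thus ?thesis using D E by (simp add: S_def wp_def)
qed

lemma core:
  fixes h :: "'a \<Rightarrow> real" and n t L X :: real and G :: "'a set"
  defines "S \<equiv> {a\<in>G. h a \<noteq> 0}"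
  defines "T \<equiv> (\<lambda>pq. (h (fst (fst pq)) * h (snd (fst pq))) * (h (fst (snd pq)) * h (snd (snd pq))))"
  assumes fin: "finite G"
    and comm: "\<And>a b. add a b = add b a"
    and hnn: "\<And>a. h a \<ge> 0"
    and n: "n > 0" and t: "t > 0" and Lpos: "L > 0"
    and L: "L = (\<Sum>a\<in>G. (h a)^2)"
    and hb: "\<And>a. a \<in> G \<Longrightarrow> (h a)^2 \<le> t * L / n"
    and F4: "L^2 \<le> t * X"
    and Q: "n * X \<le> (\<Sum>pq\<in>QS add S. T pq)"
  shows "n^3 \<le> t^3 * real (card (QS add S))"
    and "n / t \<le> 2 - 1 / real (card S) +
           (real (card (QS add S)) - 2 * real (card S)^2 + real (card S)) * t^2 / n^2"
    and "n \<le> t * real (card S)"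
proof -
  define M0 where "M0 = t * L / n"
  define Q where "Q = QS add S"
  define s where "s = real (card S)"
  have M0: "M0 > 0" using t Lpos n by (simp add: M0_def)
  have finS: "finite S" using fin by (simp add: S_def)
  have finQ: "finite Q" unfolding Q_def QS_def
    by (rule finite_subset[of _ "(S\<times>S)\<times>(S\<times>S)"]) (auto simp: finS)
  have hb2: "h a * h b \<le> M0" if "a \<in> S" "b \<in> S" for a b
  proof -
    have "(h a * h b)^2 = (h a)^2 * (h b)^2" by (simp add: power_mult_distrib)
    also have "\<dots> \<le> M0 * M0"
    proof -
      have "a \<in> G" "b \<in> G" using that by (auto simp: S_def)
      hence "(h a)^2 \<le> M0" "(h b)^2 \<le> M0" using hb unfolding M0_def by blast+
      thus ?thesis using M0 by (intro mult_mono) simp_all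
    qed
    finally have "(h a * h b)^2 \<le> M0^2" by (simp only: power2_eq_square)
    from power2_le_imp_le[OF this] M0 show ?thesis by simp
  qed
  have Tb: "T pq \<le> M0^2" if "pq \<in> Q" for pq
  proof -
    have "h (fst (fst pq)) * h (snd (fst pq)) \<le> M0" "h (fst (snd pq)) * h (snd (snd pq)) \<le> M0"
      using that by (auto simp: Q_def QS_def intro!: hb2)
    thus ?thesis unfolding T_def power2_eq_square using hnn M0 by (intro mult_mono) auto
  qed
  have LS: "L = (\<Sum>a\<in>S. (h a)^2)" unfolding L S_def
    by (rule sum.mono_neutral_right) (auto simp: fin)
  have L2: "(\<Sum>p\<in>S\<times>S. (h (fst p))^2 * (h (snd p))^2) = L^2"
  proof -
    have "L^2 = (\<Sum>a\<in>S. (h a)^2) * (\<Sum>b\<in>S. (h b)^2)" by (simp only: LS power2_eq_square[of "sum (\<lambda>a. (h a)^2) S"])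
    also have "\<dots> = (\<Sum>a\<in>S. \<Sum>b\<in>S. (h a)^2 * (h b)^2)" by (rule sum_product)
    also have "\<dots> = (\<Sum>p\<in>S\<times>S. (h (fst p))^2 * (h (snd p))^2)"
      by (simp add: sum.cartesian_product case_prod_unfold)
    finally show ?thesis by simp
  qed
  show "n \<le> t * real (card S)"
  proof -
    have "L \<le> real (card S) * M0" unfolding LS
      by (rule sum_bounded_above) (auto simp: S_def hb M0_def)
    hence "L \<le> real (card S) * t * L / n" by (simp add: M0_def)
    hence "L * n \<le> (real (card S) * t) * L" using n by (simp add: pos_le_divide_eq)
    hence "n * L \<le> (real (card S) * t) * L" by (simp add: mult.commute)
    thus ?thesis using Lpos by (simp add: mult.commute)
  qed
  have QQ: "n * X \<le> sum T Q" using Q unfolding Q_def .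
  have sTQ: "sum T Q \<le> real (card Q) * M0^2" by (rule sum_bounded_above, rule Tb)
  have LX: "n * L^2 / t \<le> n * X"
  proof -
    have "L^2 / t \<le> X" using F4 t by (simp add: pos_divide_le_eq mult.commute)
    hence "n * (L^2 / t) \<le> n * X" using n by (intro mult_left_mono) auto
    thus ?thesis by simp
  qed
  show "n^3 \<le> t^3 * real (card (QS add S))"
  proof -
    have "n * L^2 / t \<le> real (card Q) * M0^2" using LX QQ sTQ by linarith
    also have "\<dots> = (real (card Q) * t^2 / n^2) * L^2" by (simp add: M0_def power_divide power_mult_distrib)
    finally have 1: "(n / t) * L^2 \<le> (real (card Q) * t^2 / n^2) * L^2" by simp
    have "L^2 > 0" using Lpos by simp
    hence "n / t \<le> real (card Q) * t^2 / n^2" using 1 by (simp only: mult_le_cancel_right_pos)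
    hence "n / t * (t * n^2) \<le> real (card Q) * t^2 / n^2 * (t * n^2)" using t n by (intro mult_right_mono) auto
    moreover have "n / t * (t * n^2) = n^3" using t by (simp add: power2_eq_square power3_eq_cube)
    moreover have "real (card Q) * t^2 / n^2 * (t * n^2) = t^3 * real (card Q)" using n
      by (simp add: power2_eq_square power3_eq_cube)
    ultimately show ?thesis by (simp add: Q_def)
  qed
  define A1 where "A1 = (\<lambda>p. (p, p)) ` (S\<times>S)"
  define A2 where "A2 = (\<lambda>p. (p, (snd p, fst p))) ` (S\<times>S)"
  have A1Q: "A1 \<subseteq> Q" by (auto simp: A1_def Q_def QS_def)
  have A2Q: "A2 \<subseteq> Q" by (auto simp: A2_def Q_def QS_def comm)
  have A12: "A1 \<inter> A2 = (\<lambda>a. ((a,a),(a,a))) ` S" by (auto simp: A1_def A2_def)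
  have inj1: "inj_on (\<lambda>p. (p, p)) (S\<times>S)" by (auto simp: inj_on_def)
  have inj2: "inj_on (\<lambda>p. (p, (snd p, fst p))) (S\<times>S)" by (auto simp: inj_on_def)
  have inj3: "inj_on (\<lambda>a. ((a,a),(a,a))) S" by (auto simp: inj_on_def)
  have cA1: "card A1 = card S * card S" unfolding A1_def by (simp add: card_image[OF inj1] card_cartesian_product)
  have cA2: "card A2 = card S * card S" unfolding A2_def by (simp add: card_image[OF inj2] card_cartesian_product)
  have cA12: "card (A1 \<inter> A2) = card S" unfolding A12 by (simp add: card_image[OF inj3])
  have finA1: "finite A1" "finite A2" using finS by (auto simp: A1_def A2_def)
  have cU: "card (A1 \<union> A2) = 2 * card S * card S - card S"
    using card_Un_Int[OF finA1] cA1 cA2 cA12 by simp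
  have cUr: "real (card (A1 \<union> A2)) = 2 * s^2 - s"
  proof -
    have "card S \<le> 2 * card S * card S" by (cases "card S") auto
    thus ?thesis using cU by (simp add: s_def of_nat_diff power2_eq_square)
  qed
  have sA1: "sum T A1 = L^2"
  proof -
    have "sum T A1 = (\<Sum>p\<in>S\<times>S. (h (fst p))^2 * (h (snd p))^2)"
      unfolding A1_def by (simp add: sum.reindex[OF inj1] T_def power2_eq_square mult_ac)
    thus ?thesis using L2 by simp
  qed
  have sA2: "sum T A2 = L^2"
  proof -
    have "sum T A2 = (\<Sum>p\<in>S\<times>S. (h (fst p))^2 * (h (snd p))^2)"
      unfolding A2_def by (simp add: sum.reindex[OF inj2] T_def power2_eq_square mult_ac)
    thus ?thesis using L2 by simp
  qed
  define P4 where "P4 = (\<Sum>a\<in>S. (h a)^4)"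
  have sA12: "sum T (A1 \<inter> A2) = P4"
    unfolding A12 P4_def by (simp add: sum.reindex[OF inj3] T_def power4_eq_xxxx mult_ac)
  have sU: "sum T (A1 \<union> A2) = 2 * L^2 - P4"
    using sum_Un[OF finA1, of T] sA1 sA2 sA12 by simp
  have AQ: "A1 \<union> A2 \<subseteq> Q" using A1Q A2Q by simp
  have sQ: "sum T Q = sum T (Q - (A1 \<union> A2)) + sum T (A1 \<union> A2)"
    by (rule sum.subset_diff[OF AQ finQ])
  have sRest: "sum T (Q - (A1 \<union> A2)) \<le> real (card (Q - (A1 \<union> A2))) * M0^2"
    by (rule sum_bounded_above) (rule Tb, simp)
  have cle: "card (A1 \<union> A2) \<le> card Q" by (rule card_mono[OF finQ AQ])
  have cRest: "real (card (Q - (A1 \<union> A2))) = real (card Q) - (2 * s^2 - s)"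
    using card_Diff_subset[OF finite_subset[OF AQ finQ] AQ] cle cUr
    by (simp add: of_nat_diff)
  have spos: "s > 0"
  proof -
    obtain a where "a \<in> G" "h a \<noteq> 0"
    proof (rule ccontr)
      assume "\<not> thesis"
      hence "\<forall>a\<in>G. h a = 0" using that by blast
      hence "L = 0" using L by simp
      thus False using Lpos by simp
    qed
    hence "S \<noteq> {}" by (auto simp: S_def)
    thus ?thesis using finS by (simp add: s_def card_gt_0_iff)
  qed
  have P4b: "L^2 / s \<le> P4"
  proof -
    have "L^2 \<le> (\<Sum>a\<in>S. ((h a)^2)^2) * s"
      unfolding LS s_def by (rule sum_squared_le_sum_of_squares)
    hence "L^2 \<le> P4 * s" by (simp add: P4_def power_mult[symmetric])
    thus ?thesis using spos by (simp add: pos_divide_le_eq)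
  qed
  define K where "K = real (card Q) - 2 * s^2 + s"
  have Kr: "real (card Q) - (2 * s^2 - s) = K" by (simp add: K_def)
  have r: "sum T (Q - (A1 \<union> A2)) \<le> K * M0^2" using sRest unfolding cRest Kr .
  have main: "n * L^2 / t \<le> 2 * L^2 - L^2 / s + K * M0^2"
    using LX QQ sQ r sU P4b by linarith
  also have "\<dots> = (2 - 1 / s + K * t^2 / n^2) * L^2"
    using n spos by (simp add: M0_def power_divide power_mult_distrib field_simps)
  finally have 1: "(n / t) * L^2 \<le> (2 - 1 / s + K * t^2 / n^2) * L^2" by simp
  have "L^2 > 0" using Lpos by simp
  hence "n / t \<le> 2 - 1 / s + K * t^2 / n^2" using 1 by (simp only: mult_le_cancel_right_pos)
  thus "n / t \<le> 2 - 1 / real (card S) +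
           (real (card (QS add S)) - 2 * real (card S)^2 + real (card S)) * t^2 / n^2"
    by (simp add: K_def s_def Q_def)
qed

lemma energy_QS: "energy N A = card (QS (addN N) A)"
  unfolding energy_def
proof (rule bij_betw_same_card[of "\<lambda>(a,b,c,d). ((a,b),(c,d))"])
  show "bij_betw (\<lambda>(a,b,c,d). ((a,b),(c,d)))
     {(x1, x2, x3, x4). x1 \<in> A \<and> x2 \<in> A \<and> x3 \<in> A \<and> x4 \<in> A \<and> addN N x1 x2 = addN N x3 x4}
     (QS (addN N) A)"
    by (rule bij_betw_byWitness[where f' = "\<lambda>((a,b),(c,d)). (a,b,c,d)"]) (auto simp: QS_def)
qed

lemma sq_sum_le_card:
  fixes F :: "'a \<Rightarrow> complex"
  assumes fin: "finite G"
  shows "(\<Sum>x\<in>G. cmod (F x))^2 \<le> real (card {x\<in>G. F x \<noteq> 0}) * (\<Sum>x\<in>G. (cmod (F x))^2)"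
proof -
  define T where "T = {x\<in>G. F x \<noteq> 0}"
  have 1: "(\<Sum>x\<in>G. cmod (F x)) = (\<Sum>x\<in>T. cmod (F x))"
    unfolding T_def by (rule sum.mono_neutral_right) (auto simp: fin)
  have 2: "(\<Sum>x\<in>G. (cmod (F x))^2) = (\<Sum>x\<in>T. (cmod (F x))^2)"
    unfolding T_def by (rule sum.mono_neutral_right) (auto simp: fin)
  show ?thesis unfolding 1 2 T_def[symmetric]
    using sum_squared_le_sum_of_squares[of "\<lambda>x. cmod (F x)" T] by (simp add: mult.commute)
qed

lemma package:
  fixes \<phi> :: "'a \<Rightarrow> 'a \<Rightarrow> complex" and H F :: "'a \<Rightarrow> complex" and n :: nat
  assumes fin: "finite G"
    and orth: "\<And>u v. u \<in> G \<Longrightarrow> v \<in> G \<Longrightarrow> (\<Sum>x\<in>G. \<phi> u x * cnj (\<phi> v x)) = (if u = v then of_nat n else 0)"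
    and mult: "\<And>a b x. a \<in> G \<Longrightarrow> b \<in> G \<Longrightarrow> x \<in> G \<Longrightarrow> \<phi> a x * \<phi> b x = \<phi> (add a b) x"
    and addG: "\<And>a b. a \<in> G \<Longrightarrow> b \<in> G \<Longrightarrow> add a b \<in> G"
    and comm: "\<And>a b. add a b = add b a"
    and Fdef: "\<And>x. x \<in> G \<Longrightarrow> F x = c * (\<Sum>a\<in>G. H a * \<phi> a x)"
    and c: "(cmod c)^2 * real n = 1"
    and npos: "n > 0"
    and Lpos: "(\<Sum>a\<in>G. (cmod (H a))^2) > 0"
    and hb: "\<And>a. a \<in> G \<Longrightarrow> (cmod (H a))^2 \<le>
               real (card {x\<in>G. F x \<noteq> 0}) * (\<Sum>a\<in>G. (cmod (H a))^2) / real n"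
  shows "real n^3 \<le> real (card {x\<in>G. F x \<noteq> 0})^3 * real (card (QS add {a\<in>G. H a \<noteq> 0}))"
    and "real n / real (card {x\<in>G. F x \<noteq> 0}) \<le> 2 - 1 / real (card {a\<in>G. H a \<noteq> 0}) +
           (real (card (QS add {a\<in>G. H a \<noteq> 0})) - 2 * real (card {a\<in>G. H a \<noteq> 0})^2
              + real (card {a\<in>G. H a \<noteq> 0})) * real (card {x\<in>G. F x \<noteq> 0})^2 / real n^2"
    and "real n \<le> real (card {x\<in>G. F x \<noteq> 0}) * real (card {a\<in>G. H a \<noteq> 0})"
    and "(\<Sum>x\<in>G. (cmod (F x))^2) = (\<Sum>a\<in>G. (cmod (H a))^2)"
proof -
  define L where "L = (\<Sum>a\<in>G. (cmod (H a))^2)"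
  define t where "t = real (card {x\<in>G. F x \<noteq> 0})"
  define X where "X = (\<Sum>x\<in>G. (cmod (F x))^4)"
  have SS: "{a\<in>G. cmod (H a) \<noteq> 0} = {a\<in>G. H a \<noteq> 0}" by simp
  have pl: "(\<Sum>x\<in>G. (cmod (F x))^2) = L"
  proof -
    have "(\<Sum>x\<in>G. (cmod (F x))^2) = (\<Sum>x\<in>G. (cmod c)^2 * (cmod (\<Sum>a\<in>G. H a * \<phi> a x))^2)"
      by (intro sum.cong refl) (simp add: Fdef norm_mult power_mult_distrib)
    also have "\<dots> = (cmod c)^2 * (real n * L)"
      by (simp add: sum_distrib_left[symmetric] plancherel_gen[OF fin orth] L_def)
    finally show ?thesis using c by simp
  qed
  thus "(\<Sum>x\<in>G. (cmod (F x))^2) = (\<Sum>a\<in>G. (cmod (H a))^2)" by (simp add: L_def)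
  have Lp: "L > 0" using Lpos by (simp add: L_def)
  have tpos: "t > 0"
  proof -
    obtain x where "x \<in> G" "F x \<noteq> 0"
    proof (rule ccontr)
      assume "\<not> thesis"
      hence "\<forall>x\<in>G. F x = 0" using that by blast
      hence "(\<Sum>x\<in>G. (cmod (F x))^2) = 0" by simp
      thus False using pl Lp by simp
    qed
    hence "{x\<in>G. F x \<noteq> 0} \<noteq> {}" by auto
    thus ?thesis using fin by (simp add: t_def card_gt_0_iff)
  qed
  have F4: "L^2 \<le> t * X"
  proof -
    define T where "T = {x\<in>G. F x \<noteq> 0}"
    have 1: "L = (\<Sum>x\<in>T. (cmod (F x))^2)" unfolding pl[symmetric] T_def
      by (rule sum.mono_neutral_right) (auto simp: fin)
    have 2: "X = (\<Sum>x\<in>T. (cmod (F x))^4)" unfolding X_def T_def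
      by (rule sum.mono_neutral_right) (auto simp: fin)
    have 3: "(\<Sum>x\<in>T. ((cmod (F x))^2)^2) = (\<Sum>x\<in>T. (cmod (F x))^4)"
      by (intro sum.cong refl) (simp add: power_mult[symmetric])
    show ?thesis unfolding 1 2 t_def T_def[symmetric]
      using sum_squared_le_sum_of_squares[of "\<lambda>x. (cmod (F x))^2" T] unfolding 3 by (simp add: mult.commute)
  qed
  have Q: "real n * X \<le> (\<Sum>pq\<in>QS add {a\<in>G. cmod (H a) \<noteq> 0}. (cmod (H (fst (fst pq))) * cmod (H (snd (fst pq)))) *
                                   (cmod (H (fst (snd pq))) * cmod (H (snd (snd pq)))))"
    unfolding X_def SS by (rule quartic_gen[OF fin orth mult addG Fdef c]) auto
  note C = core[where G=G and h="\<lambda>a. cmod (H a)" and add=add and n="real n" and t=t and L=L and X=X, OF fin comm _ _ tpos Lp L_def _ F4 Q]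
  show "real n^3 \<le> real (card {x\<in>G. F x \<noteq> 0})^3 * real (card (QS add {a\<in>G. H a \<noteq> 0}))"
    using C(1) npos hb by (simp add: t_def L_def)
  show "real n / real (card {x\<in>G. F x \<noteq> 0}) \<le> 2 - 1 / real (card {a\<in>G. H a \<noteq> 0}) +
           (real (card (QS add {a\<in>G. H a \<noteq> 0})) - 2 * real (card {a\<in>G. H a \<noteq> 0})^2
              + real (card {a\<in>G. H a \<noteq> 0})) * real (card {x\<in>G. F x \<noteq> 0})^2 / real n^2"
    using C(2) npos hb by (simp add: t_def L_def)
  show "real n \<le> real (card {x\<in>G. F x \<noteq> 0}) * real (card {a\<in>G. H a \<noteq> 0})"
    using C(3) npos hb by (simp add: t_def L_def)
qed

lemma final_arith:
  fixes n e s p LS LE :: real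
  assumes n: "n > 0" and e: "e > 0" and s: "s \<ge> 1" and LE: "LE \<ge> 0" and p: "p = e * s"
    and h1: "n / e \<le> 2 - 1 / s + (LS - 2 * s^2 + s) * e^2 / n^2"
    and h2: "n^3 \<le> s^3 * LE"
    and h3: "n \<le> e * s"
  shows "n \<le> e * root 3 (LS - s^2 * (1 - n / p) - s * (s - 1) * (1 - sqrt (n / p) * sqrt (LE / e^3)))"
proof -
  define R where "R = sqrt (n / p) * sqrt (LE / e^3)"
  define K where "K = LS - 2 * s^2 + s"
  define q where "q = (n / e)^2"
  have spos: "s > 0" using s by simp
  have ppos: "p > 0" using p e spos by simp
  have qpos: "q > 0" using n e by (simp add: q_def)
  have ne: "n / e > 0" using n e by simp
  have "(n / e) * q \<le> (2 - 1 / s + K * e^2 / n^2) * q"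
    using h1 qpos by (intro mult_right_mono) (auto simp: K_def)
  moreover have "(n / e) * q = (n / e)^3" by (simp add: q_def power2_eq_square power3_eq_cube)
  moreover have "(2 - 1 / s + K * e^2 / n^2) * q = (2 - 1 / s) * q + K"
    using n e by (simp add: q_def power_divide field_simps)
  ultimately have s1: "(n / e)^3 \<le> (2 - 1 / s) * q + K" by simp
  have qs: "q \<le> s * (n / e)"
  proof -
    have "n / e \<le> s" using h3 e by (simp add: pos_divide_le_eq mult.commute)
    hence "(n / e) * (n / e) \<le> s * (n / e)" using ne by (intro mult_right_mono) auto
    thus ?thesis by (simp add: q_def power2_eq_square)
  qed
  have Rq: "q / s^2 \<le> R"
  proof -
    have "R = sqrt (n / p * (LE / e^3))" by (simp only: R_def real_sqrt_mult)
    moreover have "(q / s^2)^2 \<le> n / p * (LE / e^3)"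
    proof -
      have "(q / s^2)^2 = n^4 / (e^4 * s^4)" using e spos by (simp add: q_def field_simps eval_nat_numeral)
      also have "\<dots> = (n * n^3) / (e^4 * s^4)" by (simp add: eval_nat_numeral)
      also have "\<dots> \<le> (n * (s^3 * LE)) / (e^4 * s^4)"
        using h2 n e spos by (intro divide_right_mono mult_left_mono) auto
      also have "\<dots> = n / p * (LE / e^3)" using p e spos by (simp add: field_simps eval_nat_numeral)
      finally show ?thesis .
    qed
    ultimately have "sqrt ((q / s^2)^2) \<le> R" by (simp only: real_sqrt_le_mono)
    thus ?thesis using qpos spos by simp
  qed
  have s2: "q * (1 - 1 / s) \<le> s * (s - 1) * R"
  proof -
    have "s * (s - 1) * (q / s^2) \<le> s * (s - 1) * R" using Rq s by (intro mult_left_mono) auto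
    moreover have "s * (s - 1) * (q / s^2) = q * (1 - 1 / s)" using spos
      by (simp add: power2_eq_square field_simps)
    ultimately show ?thesis by simp
  qed
  have B: "LS - s^2 * (1 - n / p) - s * (s - 1) * (1 - R) = K + s * (n / e) + s * (s - 1) * R"
    using p e spos by (simp add: K_def power2_eq_square field_simps)
  have "(n / e)^3 \<le> LS - s^2 * (1 - n / p) - s * (s - 1) * (1 - R)"
    unfolding B using s1 qs s2 by (simp add: algebra_simps)
  hence "root 3 ((n / e)^3) \<le> root 3 (LS - s^2 * (1 - n / p) - s * (s - 1) * (1 - R))"
    by (simp only: real_root_le_iff zero_less_numeral)
  hence "n / e \<le> root 3 (LS - s^2 * (1 - n / p) - s * (s - 1) * (1 - R))"
    using ne by (simp add: real_root_power_cancel)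
  thus ?thesis using e by (simp add: R_def pos_divide_le_eq mult.commute)
qed

lemma dft_eq: "dft N d f m = complex_of_real (1 / sqrt (real N) ^ d) * (\<Sum>x\<in>ZNd N d. f x * cnj (chi N d x m))"
proof -
  have "cis (- 2 * pi * real (dotN d m x) / real N) = cnj (chi N d x m)" for x
  proof -
    have "cnj (chi N d x m) = cis (- (real (dotN d m x) * (2 * pi / real N)))"
      by (simp add: chi_def omg_def Complex.DeMoivre cis_cnj dotN_comm[of d x m])
    also have "- (real (dotN d m x) * (2 * pi / real N)) = - 2 * pi * real (dotN d m x) / real N"
      by simp
    finally show ?thesis by simp
  qed
  thus ?thesis by (simp add: dft_def)
qed

lemma c0_sq: "N > 0 \<Longrightarrow> (cmod (complex_of_real (1 / sqrt (real N) ^ d)))^2 * real (N ^ d) = 1"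
proof -
  assume N: "N > 0"
  have "(sqrt (real N) ^ d)^2 = sqrt (real N) ^ (2 * d)" by (simp add: power_mult[symmetric] mult.commute)
  also have "\<dots> = (sqrt (real N) ^ 2) ^ d" by (simp add: power_mult)
  also have "\<dots> = real N ^ d" by simp
  finally have 1: "(sqrt (real N) ^ d)^2 = real N ^ d" .
  have "(cmod (complex_of_real (1 / sqrt (real N) ^ d)))^2 = (1 / sqrt (real N) ^ d)^2"
    by (simp only: norm_of_real power2_abs)
  also have "\<dots> = 1 / real N ^ d" by (simp add: power_divide 1)
  finally show ?thesis using N by simp
qed

lemma inversion:
  assumes N: "N \<ge> 2" and x: "x \<in> ZNd N d"
  shows "f x = complex_of_real (1 / sqrt (real N) ^ d) * (\<Sum>m\<in>ZNd N d. dft N d f m * chi N d m x)"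
proof -
  define c where "c = complex_of_real (1 / sqrt (real N) ^ d)"
  define G where "G = ZNd N d"
  have "(\<Sum>m\<in>G. dft N d f m * chi N d m x) = (\<Sum>m\<in>G. \<Sum>y\<in>G. c * f y * (chi N d x m * cnj (chi N d y m)))"
    by (simp add: dft_eq c_def G_def sum_distrib_left sum_distrib_right chi_comm[of N d _ x] mult_ac)
  also have "\<dots> = (\<Sum>y\<in>G. c * f y * (\<Sum>m\<in>G. chi N d x m * cnj (chi N d y m)))"
    by (subst sum.swap) (simp add: sum_distrib_left)
  also have "\<dots> = (\<Sum>y\<in>G. c * f y * (if x = y then of_nat (N ^ d) else 0))"
    using N x by (intro sum.cong refl) (simp add: G_def chi_orth)
  also have "\<dots> = c * f x * of_nat (N ^ d)"
    using x by (simp add: G_def if_distrib sum.delta ZNd_fin_card cong: if_cong)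
  finally have 1: "c * (\<Sum>m\<in>G. dft N d f m * chi N d m x) = (c * c * of_nat (N ^ d)) * f x"
    by (simp add: mult_ac)
  define r where "r = 1 / sqrt (real N) ^ d"
  have cr: "c = complex_of_real r" by (simp add: c_def r_def)
  have "c * c * of_nat (N ^ d) = complex_of_real (r^2 * real (N ^ d))"
    unfolding cr by (simp add: power2_eq_square)
  also have "r^2 = (cmod (complex_of_real r))^2" by (simp only: norm_of_real power2_abs)
  also have "(cmod (complex_of_real r))^2 * real (N ^ d) = 1" using N c0_sq[of N d] by (simp add: r_def)
  finally have "c * c * of_nat (N ^ d) = 1" by simp
  hence "c * (\<Sum>m\<in>G. dft N d f m * chi N d m x) = f x" using 1 by simp
  thus ?thesis unfolding c_def G_def by simp
qed

lemma hbound: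
  fixes \<phi> :: "'a \<Rightarrow> 'a \<Rightarrow> complex"
  assumes fin: "finite G" and x: "x \<in> G"
    and Fdef: "F x = c * (\<Sum>a\<in>G. H a * \<phi> a x)"
    and nphi: "\<And>a. a \<in> G \<Longrightarrow> cmod (\<phi> a x) = 1"
  shows "(cmod (F x))^2 \<le> (cmod c)^2 * (real (card {a\<in>G. H a \<noteq> 0}) * (\<Sum>a\<in>G. (cmod (H a))^2))"
proof -
  have "cmod (\<Sum>a\<in>G. H a * \<phi> a x) \<le> (\<Sum>a\<in>G. cmod (H a * \<phi> a x))" by (rule norm_sum)
  also have "\<dots> = (\<Sum>a\<in>G. cmod (H a))" by (intro sum.cong refl) (simp add: norm_mult nphi)
  finally have 1: "cmod (F x) \<le> cmod c * (\<Sum>a\<in>G. cmod (H a))"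
    by (simp add: Fdef norm_mult mult_left_mono)
  hence "(cmod (F x))^2 \<le> (cmod c * (\<Sum>a\<in>G. cmod (H a)))^2" by (simp add: power_mono)
  also have "\<dots> = (cmod c)^2 * (\<Sum>a\<in>G. cmod (H a))^2" by (simp add: power_mult_distrib)
  also have "\<dots> \<le> (cmod c)^2 * (real (card {a\<in>G. H a \<noteq> 0}) * (\<Sum>a\<in>G. (cmod (H a))^2))"
    by (intro mult_left_mono sq_sum_le_card fin) simp
  finally show ?thesis .
qed

theorem mainTheorem1:
  fixes N d :: nat and f :: "(nat \<Rightarrow> nat) \<Rightarrow> complex"
  assumes "N \<ge> 2" and "d \<ge> 1"
    and "\<exists>x\<in>ZNd N d. f x \<noteq> 0"
  defines "E \<equiv> suppN N d f" and "\<Sigma> \<equiv> suppN N d (dft N d f)"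
  shows "(real N ^ d \<le> real (card E) * root 3
           (real (energy N \<Sigma>) - real (card \<Sigma>) ^ 2 * (1 - real N ^ d / (real (card E) * real (card \<Sigma>)))
            - real (card \<Sigma>) * (real (card \<Sigma>) - 1) *
              (1 - sqrt (real N ^ d / (real (card E) * real (card \<Sigma>))) * sqrt (real (energy N E) / real (card E) ^ 3)))) \<and>
          (real N ^ d \<le> real (card \<Sigma>) * root 3
           (real (energy N E) - real (card E) ^ 2 * (1 - real N ^ d / (real (card E) * real (card \<Sigma>)))
            - real (card E) * (real (card E) - 1) *
              (1 - sqrt (real N ^ d / (real (card E) * real (card \<Sigma>))) * sqrt (real (energy N \<Sigma>) / real (card \<Sigma>) ^ 3))))"
proof -
  have N0: "N > 0" using assms(1) by simp
  define G where "G = ZNd N d"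
  define g where "g = dft N d f"
  define c where "c = complex_of_real (1 / sqrt (real N) ^ d)"
  define n where "n = N ^ d"
  have finG: "finite G" by (simp add: G_def ZNd_fin_card)
  have npos: "n > 0" using N0 by (simp add: n_def)
  have cc: "(cmod c)^2 * real n = 1" unfolding c_def n_def by (rule c0_sq[OF N0])
  have cinv: "(cmod c)^2 = 1 / real n" using cc npos by (simp add: field_simps)
  have orth1: "\<And>u v. u \<in> G \<Longrightarrow> v \<in> G \<Longrightarrow>
      (\<Sum>x\<in>G. chi N d u x * cnj (chi N d v x)) = (if u = v then of_nat n else 0)"
    using assms(1) by (simp add: G_def n_def chi_orth)
  have orth2: "\<And>u v. u \<in> G \<Longrightarrow> v \<in> G \<Longrightarrow>
      (\<Sum>x\<in>G. cnj (chi N d u x) * cnj (cnj (chi N d v x))) = (if u = v then of_nat n else 0)"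
  proof -
    fix u v assume uv: "u \<in> G" "v \<in> G"
    have "(\<Sum>x\<in>G. cnj (chi N d u x) * cnj (cnj (chi N d v x))) = cnj (\<Sum>x\<in>G. chi N d u x * cnj (chi N d v x))"
      by simp
    also have "\<dots> = cnj (if u = v then of_nat n else 0)" using orth1[OF uv] by simp
    also have "\<dots> = (if u = v then of_nat n else 0)" by simp
    finally show "(\<Sum>x\<in>G. cnj (chi N d u x) * cnj (cnj (chi N d v x))) = (if u = v then of_nat n else 0)" .
  qed
  have mult1: "\<And>a b x. a \<in> G \<Longrightarrow> b \<in> G \<Longrightarrow> x \<in> G \<Longrightarrow> chi N d a x * chi N d b x = chi N d (addN N a b) x"
    using N0 by (simp add: chi_add1)
  have mult2: "\<And>a b x. a \<in> G \<Longrightarrow> b \<in> G \<Longrightarrow> x \<in> G \<Longrightarrow>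
      cnj (chi N d a x) * cnj (chi N d b x) = cnj (chi N d (addN N a b) x)"
    using N0 by (simp add: chi_add1[symmetric])
  have addG: "\<And>a b. a \<in> G \<Longrightarrow> b \<in> G \<Longrightarrow> addN N a b \<in> G" using N0 by (simp add: G_def addN_ZNd)
  have comm: "\<And>a b. addN N a b = addN N b a" by (rule addN_comm)
  have fdef: "\<And>x. x \<in> G \<Longrightarrow> f x = c * (\<Sum>m\<in>G. g m * chi N d m x)"
    unfolding G_def g_def c_def by (rule inversion[OF assms(1)])
  have gdef: "\<And>m. m \<in> G \<Longrightarrow> g m = c * (\<Sum>x\<in>G. f x * cnj (chi N d x m))"
    unfolding G_def g_def c_def by (rule dft_eq)
  have Pl: "(\<Sum>m\<in>G. (cmod (g m))^2) = (\<Sum>x\<in>G. (cmod (f x))^2)"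
  proof -
    have "(\<Sum>m\<in>G. (cmod (g m))^2) = (\<Sum>m\<in>G. (cmod c)^2 * (cmod (\<Sum>x\<in>G. f x * cnj (chi N d x m)))^2)"
      by (intro sum.cong refl) (simp add: gdef norm_mult power_mult_distrib)
    also have "\<dots> = (cmod c)^2 * (real n * (\<Sum>x\<in>G. (cmod (f x))^2))"
      by (simp add: sum_distrib_left[symmetric]
          plancherel_gen[where \<phi>="\<lambda>a x. cnj (chi N d a x)", OF finG orth2])
    finally show ?thesis using cc by simp
  qed
  have Lf: "(\<Sum>x\<in>G. (cmod (f x))^2) > 0"
  proof -
    obtain x where x: "x \<in> G" "f x \<noteq> 0" using assms(3) by (auto simp: G_def)
    show ?thesis by (rule sum_pos2[OF finG x(1)]) (use x in auto)
  qed
  have Lg: "(\<Sum>m\<in>G. (cmod (g m))^2) > 0" using Pl Lf by simp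
  have hb1: "\<And>a. a \<in> G \<Longrightarrow> (cmod (g a))^2 \<le>
               real (card {x\<in>G. f x \<noteq> 0}) * (\<Sum>a\<in>G. (cmod (g a))^2) / real n"
  proof -
    fix m assume m: "m \<in> G"
    have "(cmod (g m))^2 \<le> (cmod c)^2 * (real (card {x\<in>G. f x \<noteq> 0}) * (\<Sum>x\<in>G. (cmod (f x))^2))"
      by (rule hbound[where \<phi>="\<lambda>a x. cnj (chi N d a x)" and F=g and H=f and c=c, OF finG m gdef[OF m]]) simp
    thus "(cmod (g m))^2 \<le> real (card {x\<in>G. f x \<noteq> 0}) * (\<Sum>a\<in>G. (cmod (g a))^2) / real n"
      by (simp add: cinv Pl)
  qed
  have hb2: "\<And>a. a \<in> G \<Longrightarrow> (cmod (f a))^2 \<le>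
               real (card {x\<in>G. g x \<noteq> 0}) * (\<Sum>a\<in>G. (cmod (f a))^2) / real n"
  proof -
    fix x assume x: "x \<in> G"
    have "(cmod (f x))^2 \<le> (cmod c)^2 * (real (card {m\<in>G. g m \<noteq> 0}) * (\<Sum>m\<in>G. (cmod (g m))^2))"
      by (rule hbound[where \<phi>="chi N d" and F=f and H=g and c=c, OF finG x fdef[OF x]]) simp
    thus "(cmod (f x))^2 \<le> real (card {x\<in>G. g x \<noteq> 0}) * (\<Sum>a\<in>G. (cmod (f a))^2) / real n"
      by (simp add: cinv Pl)
  qed
  note P1 = package[where \<phi>="chi N d" and H=g and F=f and add="addN N" and G=G and n=n and c=c,
      OF finG orth1 mult1 addG comm fdef cc npos Lg hb1]
  note P2 = package[where \<phi>="\<lambda>a x. cnj (chi N d a x)" and H=f and F=g and add="addN N" and G=G and n=n and c=c,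
      OF finG orth2 mult2 addG comm gdef cc npos Lf hb2]
  have Edef: "E = {x\<in>G. f x \<noteq> 0}" by (simp add: E_def suppN_def G_def)
  have Sdef: "\<Sigma> = {x\<in>G. g x \<noteq> 0}" by (simp add: \<Sigma>_def suppN_def G_def g_def)
  have nN: "real N ^ d = real n" by (simp add: n_def)
  have LS: "energy N \<Sigma> = card (QS (addN N) {a\<in>G. g a \<noteq> 0})" by (simp add: energy_QS Sdef)
  have LE: "energy N E = card (QS (addN N) {a\<in>G. f a \<noteq> 0})" by (simp add: energy_QS Edef)
  have h3: "real n \<le> real (card E) * real (card \<Sigma>)" using P1(3) by (simp add: Edef Sdef)
  have epos: "real (card E) > 0"
  proof (rule ccontr)
    assume "\<not> real (card E) > 0"
    hence "real (card E) = 0" by simp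
    thus False using h3 npos by simp
  qed
  have spos: "real (card \<Sigma>) > 0"
  proof (rule ccontr)
    assume "\<not> real (card \<Sigma>) > 0"
    hence "real (card \<Sigma>) = 0" by simp
    thus False using h3 npos by simp
  qed
  have e1: "real (card E) \<ge> 1" using epos by simp
  have s1: "real (card \<Sigma>) \<ge> 1" using spos by simp
  have A: "real n \<le> real (card E) * root 3
           (real (energy N \<Sigma>) - real (card \<Sigma>) ^ 2 * (1 - real n / (real (card E) * real (card \<Sigma>)))
            - real (card \<Sigma>) * (real (card \<Sigma>) - 1) *
              (1 - sqrt (real n / (real (card E) * real (card \<Sigma>))) * sqrt (real (energy N E) / real (card E) ^ 3)))"
  proof (rule final_arith)
    show "real n > 0" using npos by simp
    show "real (card E) > 0" by (rule epos)
    show "real (card \<Sigma>) \<ge> 1" by (rule s1)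
    show "real (energy N E) \<ge> 0" by simp
    show "real (card E) * real (card \<Sigma>) = real (card E) * real (card \<Sigma>)" by simp
    show "real n / real (card E) \<le> 2 - 1 / real (card \<Sigma>) +
        (real (energy N \<Sigma>) - 2 * real (card \<Sigma>)^2 + real (card \<Sigma>)) * real (card E)^2 / real n^2"
      using P1(2) unfolding LS unfolding Edef Sdef by simp
    show "real n^3 \<le> real (card \<Sigma>)^3 * real (energy N E)"
      using P2(1) unfolding LE unfolding Edef Sdef by simp
    show "real n \<le> real (card E) * real (card \<Sigma>)" by (rule h3)
  qed
  have B: "real n \<le> real (card \<Sigma>) * root 3
           (real (energy N E) - real (card E) ^ 2 * (1 - real n / (real (card E) * real (card \<Sigma>)))
            - real (card E) * (real (card E) - 1) *
              (1 - sqrt (real n / (real (card E) * real (card \<Sigma>))) * sqrt (real (energy N \<Sigma>) / real (card \<Sigma>) ^ 3)))"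
  proof (rule final_arith)
    show "real n > 0" using npos by simp
    show "real (card \<Sigma>) > 0" by (rule spos)
    show "real (card E) \<ge> 1" by (rule e1)
    show "real (energy N \<Sigma>) \<ge> 0" by simp
    show "real (card E) * real (card \<Sigma>) = real (card \<Sigma>) * real (card E)" by (simp add: mult.commute)
    show "real n / real (card \<Sigma>) \<le> 2 - 1 / real (card E) +
        (real (energy N E) - 2 * real (card E)^2 + real (card E)) * real (card \<Sigma>)^2 / real n^2"
      using P2(2) unfolding LE unfolding Edef Sdef by simp
    show "real n^3 \<le> real (card E)^3 * real (energy N \<Sigma>)"
      using P1(1) unfolding LS unfolding Edef Sdef by simp
    show "real n \<le> real (card \<Sigma>) * real (card E)" using h3 by (simp add: mult.commute)
  qed
  show ?thesis using A B unfolding nN by simp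
qed

end
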